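(* Let $\mathcal{C}$ be a fixed finite catalogue of contents with normalized popularities $\hat\nu_c>0$, $\sum_{c\in\mathcal{C}}\hat\nu_c=1$, let $M\ge 1$ and $U\ge 1$ be integers with $M\le|\mathcal{C}|$, and let $\rho>0$ be fixed. For each subset $j\subseteq\mathcal{C}$ with $|j|=M$ put $$m_j=\frac{1}{Z}\prod_{c\in j}\hat\nu_c,\qquad Z=\sum_{j'\subseteq\mathcal{C},\,|j'|=M}\ \prod_{c\in j'}\hat\nu_c .$$ For each integer $B\ge1$ consider the loss network in which calls of type $c\in\mathcal{C}$ arrive according to independent Poisson processes of rate $\nu_c^{(B)}=\rho U\hat\nu_c B$, each accepted call stays in the system for an independent exponential time of mean $1$, and for every nonempty $\mathcal{S}\subseteq\mathcal{C}$ there is a constraint ("virtual link") of capacity $$W^{(B)}_{\mathcal{S}}=U B\sum_{j\subseteq\mathcal{C},\,|j|=M,\ j\cap\mathcal{S}\neq\emptyset} m_j ;$$ an arriving call of type $c$ is accepted if and only if, after adding it, the vector $\mathbf{n}=(n_c)_{c\in\mathcal{C}}$ of numbers of calls in progress satisfies $\sum_{c\in\mathcal{S}}n_c\le W^{(B)}_{\mathcal{S}}$ for every $\mathcal{S}\subseteq\mathcal{C}$, and is lost otherwise. Let $A^{(B)}_c$ denote the stationary probability that an arriving call of type $c$ is accepted. Then for every $c\in\mathcal{C}$, $$\lim_{B\to\infty}A^{(B)}_c=\min\{1,1/\rho\}.$$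
   Context: Interpretation: $B$ boxes each cache a set of $M$ distinct contents and can serve at most $U$ concurrent unit-rate streams; $m_j$ is the fraction of boxes caching the set $j$ (the "proportional-to-product" placement). By Hall's theorem, a vector of ongoing requests $\mathbf{n}$ can be assigned to boxes holding the requested contents, respecting the upload limit $U$ per box, iff $\sum_{c\in\mathcal{S}}n_c\le U\,|\{b:\mathcal{S}\cap\mathcal{J}_b\neq\emptyset\}|$ for all $\mathcal{S}\subseteq\mathcal{C}$ ($\mathcal{J}_b$ the cache of box $b$); the capacities $W^{(B)}_{\mathcal{S}}$ are the large-$B$ values of these right-hand sides. The system load is $\rho=\sum_c\nu^{(B)}_c/(BU)$. *)

theory Defs
  imports "HOL-Analysis.Analysis"
begin

definition placement_Z :: "'a set \<Rightarrow> ('a \<Rightarrow> real) \<Rightarrow> nat \<Rightarrow> real" where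
  "placement_Z C nuh M = (\<Sum>j' \<in> {j. j \<subseteq> C \<and> card j = M}. \<Prod>c\<in>j'. nuh c)"

definition placement_m :: "'a set \<Rightarrow> ('a \<Rightarrow> real) \<Rightarrow> nat \<Rightarrow> 'a set \<Rightarrow> real" where
  "placement_m C nuh M j = (\<Prod>c\<in>j. nuh c) / placement_Z C nuh M"

definition link_cap :: "'a set \<Rightarrow> ('a \<Rightarrow> real) \<Rightarrow> nat \<Rightarrow> nat \<Rightarrow> nat \<Rightarrow> 'a set \<Rightarrow> real" where
  "link_cap C nuh M U B S =
     real U * real B * (\<Sum>j \<in> {j. j \<subseteq> C \<and> card j = M \<and> j \<inter> S \<noteq> {}}. placement_m C nuh M j)"

definition arr_rate :: "('a \<Rightarrow> real) \<Rightarrow> nat \<Rightarrow> real \<Rightarrow> nat \<Rightarrow> 'a \<Rightarrow> real" where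
  "arr_rate nuh U \<rho> B c = \<rho> * real U * nuh c * real B"

definition feasible :: "'a set \<Rightarrow> ('a \<Rightarrow> real) \<Rightarrow> nat \<Rightarrow> nat \<Rightarrow> nat \<Rightarrow> ('a \<Rightarrow> nat) set" where
  "feasible C nuh M U B =
     {n. (\<forall>c. c \<notin> C \<longrightarrow> n c = 0) \<and>
         (\<forall>S. S \<subseteq> C \<longrightarrow> real (\<Sum>c\<in>S. n c) \<le> link_cap C nuh M U B S)}"

text \<open>Stationary distribution of the loss-network Markov chain: a probability vector on the
  feasible states satisfying the global balance equations of the generator
  (arrival of type c at rate arr_rate if the new state is feasible, otherwise lost;
   each call in progress departs at rate 1).\<close>
definition stationary ::
  "'a set \<Rightarrow> ('a \<Rightarrow> real) \<Rightarrow> nat \<Rightarrow> nat \<Rightarrow> real \<Rightarrow> nat \<Rightarrow> (('a \<Rightarrow> nat) \<Rightarrow> real) \<Rightarrow> bool" where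
  "stationary C nuh M U \<rho> B \<pi> \<longleftrightarrow>
     (let F = feasible C nuh M U B; \<nu> = arr_rate nuh U \<rho> B in
       (\<forall>n. \<pi> n \<ge> 0) \<and> (\<forall>n. n \<notin> F \<longrightarrow> \<pi> n = 0) \<and> (\<Sum>n\<in>F. \<pi> n) = 1 \<and>
       (\<forall>n\<in>F.
          \<pi> n * ((\<Sum>c\<in>C. if n(c := n c + 1) \<in> F then \<nu> c else 0) + (\<Sum>c\<in>C. real (n c)))
          = (\<Sum>c\<in>C. if 0 < n c \<and> n(c := n c - 1) \<in> F then \<nu> c * \<pi> (n(c := n c - 1)) else 0)
            + (\<Sum>c\<in>C. if n(c := n c + 1) \<in> F
                        then real (n c + 1) * \<pi> (n(c := n c + 1)) else 0)))"

text \<open>Stationary acceptance probability of a type-c call (by PASTA: stationary probability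
  that the state allows one more type-c call).\<close>
definition accept_prob :: "'a set \<Rightarrow> ('a \<Rightarrow> real) \<Rightarrow> nat \<Rightarrow> nat \<Rightarrow> real \<Rightarrow> nat \<Rightarrow> 'a \<Rightarrow> real" where
  "accept_prob C nuh M U \<rho> B c =
     (let F = feasible C nuh M U B; \<pi> = (THE \<pi>. stationary C nuh M U \<rho> B \<pi>) in
       \<Sum>n\<in>{n\<in>F. n(c := n c + 1) \<in> F}. \<pi> n)"

end

theory Submission
  imports Defs "HOL-Real_Asymp.Real_Asymp"
begin

lemma ln_fact_Suc: "ln (fact (Suc k) :: real) = ln (real (Suc k)) + ln (fact k)"
  by (simp add: ln_mult del: of_nat_Suc)

lemma ln_diff_le: "1 \<le> k \<Longrightarrow> real k * (ln (real k + 1) - ln (real k)) \<le> 1"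
proof -
  assume k: "1 \<le> k"
  have "ln (real k + 1) - ln (real k) = ln ((real k + 1) / real k)" using k by (simp add: ln_div)
  also have "\<dots> \<le> (real k + 1) / real k - 1" using k by (intro ln_le_minus_one) auto
  also have "\<dots> = 1 / real k" using k by (simp add: field_simps)
  finally show ?thesis using k by (simp add: field_simps)
qed

lemma ln_diff_ge: "1 \<le> k \<Longrightarrow> 1 \<le> (real k + 1) * (ln (real k + 1) - ln (real k))"
proof -
  assume k: "1 \<le> k"
  have "ln (real k / (real k + 1)) \<le> real k / (real k + 1) - 1" using k by (intro ln_le_minus_one) auto
  then have "ln (real k) - ln (real k + 1) \<le> - 1 / (real k + 1)" using k by (simp add: ln_div field_simps)
  then show ?thesis using k by (simp add: field_simps)
qed

lemma ln_fact_lower: "real k * ln (real k) - real k \<le> ln (fact k :: real)"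
proof (induction k)
  case 0 then show ?case by simp
next
  case (Suc k)
  show ?case
  proof (cases "k = 0")
    case True then show ?thesis by simp
  next
    case False
    then have "1 \<le> k" by simp
    from ln_diff_le[OF this] have "real k * ln (real k + 1) \<le> real k * ln (real k) + 1" by (simp add: algebra_simps)
    then show ?thesis using Suc.IH unfolding ln_fact_Suc by (simp add: algebra_simps)
  qed
qed

lemma ln_fact_upper: "1 \<le> k \<Longrightarrow> ln (fact k :: real) \<le> (real k + 1) * ln (real k) - real k + 1"
proof (induction k rule: dec_induct)
  case base then show ?case by simp
next
  case (step k)
  from ln_diff_ge[OF step.hyps(1)] have "(real k + 1) * ln (real k) + 1 \<le> (real k + 1) * ln (real k + 1)" by (simp add: algebra_simps)
  then show ?case using step.IH unfolding ln_fact_Suc by (simp add: algebra_simps)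
qed

lemma D_lower:
  fixes t s :: real
  assumes t: "0 \<le> t" and s: "0 < s"
  shows "(sqrt s - sqrt t)^2 \<le> t * ln t - t * ln s - t + s"
proof (cases "t = 0")
  case True then show ?thesis using s by (simp add: power2_eq_square)
next
  case False
  then have tp: "0 < t" using t by simp
  have "ln (sqrt (s / t)) \<le> sqrt (s / t) - 1" using tp s by (intro ln_le_minus_one) auto
  moreover have "ln (sqrt (s / t)) = (ln s - ln t) / 2" using tp s by (simp add: ln_sqrt ln_div)
  ultimately have "ln s - ln t \<le> 2 * sqrt (s / t) - 2" by simp
  then have "t * (ln s - ln t) \<le> t * (2 * sqrt (s / t) - 2)" using tp by (intro mult_left_mono) auto
  also have "t * sqrt (s / t) = sqrt s * sqrt t"
    using tp s by (simp add: real_sqrt_divide field_simps)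
  then have "t * (2 * sqrt (s / t) - 2) = 2 * sqrt s * sqrt t - 2 * t" by (simp add: algebra_simps)
  finally have "t * ln s - t * ln t \<le> 2 * sqrt s * sqrt t - 2 * t" by (simp add: algebra_simps)
  moreover have "(sqrt s - sqrt t)^2 = s - 2 * sqrt s * sqrt t + t" using tp s by (simp add: power2_diff)
  ultimately show ?thesis by simp
qed

lemma ln_ratio:
  fixes a s :: real
  assumes s: "0 < s" and sa: "s \<le> a" and as: "a \<le> s + 1"
  shows "0 \<le> ln a - ln s" "ln a - ln s \<le> 1 / s"
proof -
  show "0 \<le> ln a - ln s" using s sa by simp
  have "ln a - ln s = ln (a / s)" using s sa by (simp add: ln_div)
  also have "\<dots> \<le> a / s - 1" using s sa by (intro ln_le_minus_one) auto
  also have "\<dots> = (a - s) / s" using s by (simp add: field_simps)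
  also have "\<dots> \<le> 1 / s" using s as by (intro divide_right_mono) auto
  finally show "ln a - ln s \<le> 1 / s" .
qed

lemma poly_exp_lim:
  fixes \<eta> :: real
  assumes eta: "0 < \<eta>"
  shows "((\<lambda>x. (x + 1) ^ k * exp (- \<eta> * x)) \<longlongrightarrow> 0) at_top"
proof -
  have lim: "((\<lambda>y. y ^ k / exp y) \<longlongrightarrow> (0::real)) at_top" by (rule tendsto_power_div_exp_0)
  have fl: "filterlim (\<lambda>x. \<eta> * (x + 1)) at_top at_top"
    using eta by real_asymp
  have "((\<lambda>x. (\<eta> * (x + 1)) ^ k / exp (\<eta> * (x + 1))) \<longlongrightarrow> 0) at_top"
    by (rule filterlim_compose[OF lim fl])
  then have "((\<lambda>x. (exp \<eta> / \<eta> ^ k) * ((\<eta> * (x + 1)) ^ k / exp (\<eta> * (x + 1)))) \<longlongrightarrow> (exp \<eta> / \<eta> ^ k) * 0) at_top"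
    by (intro tendsto_mult tendsto_const)
  moreover have "(exp \<eta> / \<eta> ^ k) * ((\<eta> * (x + 1)) ^ k / exp (\<eta> * (x + 1))) = (x + 1) ^ k * exp (- \<eta> * x)" for x
  proof -
    have a: "(\<eta> * (x + 1)) ^ k = \<eta> ^ k * (x + 1) ^ k" by (simp add: power_mult_distrib)
    have b: "exp (\<eta> * (x + 1)) = exp \<eta> * exp (\<eta> * x)" by (simp add: exp_add[symmetric] algebra_simps)
    have c: "exp (- \<eta> * x) = 1 / exp (\<eta> * x)" by (simp add: exp_minus field_simps)
    show ?thesis unfolding a b c using eta by (simp add: field_simps)
  qed
  ultimately show ?thesis by simp
qed

locale LN =
  fixes C :: "'a set" and nuh :: "'a \<Rightarrow> real" and M U :: nat and \<rho> :: real
  assumes finC: "finite C" and pos: "\<forall>x\<in>C. nuh x > 0" and sum1: "(\<Sum>x\<in>C. nuh x) = 1"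
    and M1: "1 \<le> M" and U1: "1 \<le> U" and MC: "M \<le> card C" and rho: "\<rho> > 0"
begin

definition w :: "'a set \<Rightarrow> real" where "w j = (\<Prod>c\<in>j. nuh c)"
definition E :: "nat \<Rightarrow> 'a set \<Rightarrow> real" where "E k T = (\<Sum>j\<in>{j. j \<subseteq> T \<and> card j = k}. w j)"

lemma w_nonneg: "j \<subseteq> C \<Longrightarrow> 0 \<le> w j"
  unfolding w_def using pos by (intro prod_nonneg) (auto intro: less_imp_le)

lemma w_pos: "j \<subseteq> C \<Longrightarrow> 0 < w j"
  unfolding w_def using pos by (intro prod_pos) auto

lemma fin_subsets: "finite T \<Longrightarrow> finite {j. j \<subseteq> T \<and> P j}"
  by (rule finite_subset[of _ "Pow T"]) auto

lemma E_le:
  assumes "T \<subseteq> C"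
  shows "E M T \<le> (\<Sum>c\<in>T. nuh c) * E (M-1) T"
proof -
  have fT: "finite T" using finite_subset[OF assms finC] .
  define P where "P = {(c,j'). c \<in> T \<and> j' \<subseteq> T \<and> card j' = M-1 \<and> c \<notin> j'}"
  define g where "g = (\<lambda>(c::'a,j'). insert c j')"
  define J' where "J' = {j. j \<subseteq> T \<and> card j = M-1}"
  have fJ': "finite J'" unfolding J'_def by (rule fin_subsets[OF fT])
  have PT: "P \<subseteq> T \<times> J'" unfolding P_def J'_def by auto
  have fP: "finite P" using finite_subset[OF PT] fJ' fT by blast
  have img: "g ` P = {j. j \<subseteq> T \<and> card j = M}"
  proof
    show "g ` P \<subseteq> {j. j \<subseteq> T \<and> card j = M}"
    proof
      fix x assume "x \<in> g ` P"
      then obtain c j' where cj: "(c,j') \<in> P" "x = insert c j'" unfolding g_def by auto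
      then have "finite j'" using fT finite_subset unfolding P_def by auto
      then show "x \<in> {j. j \<subseteq> T \<and> card j = M}" using cj M1 unfolding P_def by auto
    qed
  next
    show "{j. j \<subseteq> T \<and> card j = M} \<subseteq> g ` P"
    proof
      fix j assume j: "j \<in> {j. j \<subseteq> T \<and> card j = M}"
      then have "j \<noteq> {}" using M1 by auto
      then obtain c where c: "c \<in> j" by auto
      have fj: "finite j" using j fT finite_subset by auto
      have "(c, j - {c}) \<in> P" using j c fj unfolding P_def by auto
      moreover have "j = g (c, j - {c})" using c unfolding g_def by auto
      ultimately show "j \<in> g ` P" by blast
    qed
  qed
  have "E M T = sum w (g ` P)" unfolding E_def img ..
  also have "\<dots> \<le> sum (w \<circ> g) P"
    by (rule sum_image_le[OF fP]) (use assms in \<open>auto simp: P_def g_def intro!: w_nonneg\<close>)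
  also have "\<dots> = (\<Sum>(c,j')\<in>P. nuh c * w j')"
  proof (rule sum.cong)
    fix x assume "x \<in> P"
    then obtain c j' where x: "x = (c,j')" "c \<in> T" "j' \<subseteq> T" "c \<notin> j'" unfolding P_def by auto
    then have "finite j'" using fT finite_subset by auto
    then show "(w \<circ> g) x = (case x of (c,j') \<Rightarrow> nuh c * w j')"
      using x unfolding g_def w_def by auto
  qed simp
  also have "\<dots> \<le> (\<Sum>(c,j')\<in>T \<times> J'. nuh c * w j')"
  proof (rule sum_mono2)
    show "finite (T \<times> J')" using fT fJ' by simp
    show "P \<subseteq> T \<times> J'" by (rule PT)
    fix x assume "x \<in> T \<times> J' - P"
    then obtain c j' where x: "x = (c,j')" "c \<in> T" "j' \<subseteq> T" unfolding J'_def by auto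
    have "0 \<le> nuh c" using x assms pos by (auto intro: less_imp_le)
    moreover have "0 \<le> w j'" using x assms by (intro w_nonneg) auto
    ultimately show "0 \<le> (case x of (c,j') \<Rightarrow> nuh c * w j')" using x by simp
  qed
  also have "\<dots> = (\<Sum>c\<in>T. nuh c) * E (M-1) T"
    unfolding E_def J'_def[symmetric] sum_product sum.cartesian_product by simp
  finally show ?thesis .
qed

lemma X_ge:
  assumes "S \<subseteq> C"
  shows "(\<Sum>j\<in>{j. j \<subseteq> C \<and> card j = M \<and> j \<inter> S \<noteq> {}}. w j) \<ge> (\<Sum>c\<in>S. nuh c) * E (M-1) (C - S)"
proof -
  define T where "T = C - S"
  have fT: "finite T" using finC T_def by auto
  have fS: "finite S" using assms finC finite_subset by auto
  define J' where "J' = {j. j \<subseteq> T \<and> card j = M-1}"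
  have fJ': "finite J'" unfolding J'_def by (rule fin_subsets[OF fT])
  define h where "h = (\<lambda>(c::'a,j'). insert c j')"
  have inj: "inj_on h (S \<times> J')"
  proof (rule inj_onI)
    fix x y assume x: "x \<in> S \<times> J'" and y: "y \<in> S \<times> J'" and e: "h x = h y"
    obtain r j where xx: "x = (r,j)" "r \<in> S" "j \<subseteq> T" using x J'_def by auto
    obtain r2 j2 where yy: "y = (r2,j2)" "r2 \<in> S" "j2 \<subseteq> T" using y J'_def by auto
    have e2: "insert r j = insert r2 j2" using e xx yy h_def by simp
    have a1: "insert r j \<inter> S = {r}" using xx T_def by blast
    have a2: "insert r2 j2 \<inter> S = {r2}" using yy T_def by blast
    have "r = r2" using e2 a1 a2 by simp
    moreover have "j = insert r j - S" using xx T_def by blast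
    moreover have "j2 = insert r2 j2 - S" using yy T_def by blast
    ultimately show "x = y" using xx(1) yy(1) e2 by simp
  qed
  have sub: "h ` (S \<times> J') \<subseteq> {j. j \<subseteq> C \<and> card j = M \<and> j \<inter> S \<noteq> {}}"
  proof
    fix x assume "x \<in> h ` (S \<times> J')"
    then obtain r j where rj: "x = insert r j" "r \<in> S" "j \<subseteq> T" "card j = M - 1" unfolding h_def J'_def by auto
    have "finite j" using rj fT finite_subset by auto
    moreover have "r \<notin> j" using rj T_def by auto
    ultimately have "card x = M" using rj M1 by simp
    moreover have "x \<subseteq> C" using rj assms T_def by blast
    moreover have "x \<inter> S \<noteq> {}" using rj by blast
    ultimately show "x \<in> {j. j \<subseteq> C \<and> card j = M \<and> j \<inter> S \<noteq> {}}" by blast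
  qed
  have "(\<Sum>c\<in>S. nuh c) * E (M-1) T = (\<Sum>(c,j')\<in>S \<times> J'. nuh c * w j')"
    unfolding E_def J'_def[symmetric] sum_product sum.cartesian_product by simp
  also have "\<dots> = (\<Sum>x\<in>S \<times> J'. w (h x))"
  proof (rule sum.cong)
    fix x assume "x \<in> S \<times> J'"
    then obtain c j' where x: "x = (c,j')" "c \<in> S" "j' \<subseteq> T" unfolding J'_def by auto
    then have "finite j'" "c \<notin> j'" using fT finite_subset T_def by auto
    then show "(case x of (c,j') \<Rightarrow> nuh c * w j') = w (h x)"
      using x unfolding h_def w_def by auto
  qed simp
  also have "\<dots> = sum w (h ` (S \<times> J'))" by (rule sum.reindex[OF inj, symmetric, unfolded comp_def])
  also have "\<dots> \<le> (\<Sum>j\<in>{j. j \<subseteq> C \<and> card j = M \<and> j \<inter> S \<noteq> {}}. w j)"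
    by (rule sum_mono2[OF _ sub]) (auto intro: fin_subsets[OF finC] w_nonneg)
  finally show ?thesis unfolding T_def .
qed

end

context LN begin

definition Js where "Js = {j. j \<subseteq> C \<and> card j = M}"

lemma Z_eq: "placement_Z C nuh M = sum w Js"
  unfolding placement_Z_def Js_def w_def ..

lemma Z_pos: "placement_Z C nuh M > 0"
proof -
  obtain j where j: "j \<subseteq> C" "card j = M" using obtain_subset_with_card_n[OF MC] by blast
  have fJ: "finite Js" unfolding Js_def by (rule fin_subsets[OF finC])
  have "w j \<le> sum w Js"
  proof (rule member_le_sum)
    show "j \<in> Js" using j Js_def by simp
    show "finite Js" by (rule fJ)
    fix x assume "x \<in> Js - {j}" then show "0 \<le> w x" using w_nonneg Js_def by auto
  qed
  moreover have "w j > 0" using w_pos j by auto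
  ultimately show ?thesis unfolding Z_eq by linarith
qed

lemma cap_eq: "link_cap C nuh M U B S = real U * real B * (\<Sum>j\<in>{j. j \<subseteq> C \<and> card j = M \<and> j \<inter> S \<noteq> {}}. w j) / placement_Z C nuh M"
  unfolding link_cap_def placement_m_def w_def by (simp add: sum_divide_distrib[symmetric])

lemma cap_ge:
  assumes S: "S \<subseteq> C"
  shows "link_cap C nuh M U B S \<ge> real U * real B * (\<Sum>c\<in>S. nuh c)"
proof -
  define X where "X = (\<Sum>j\<in>{j. j \<subseteq> C \<and> card j = M \<and> j \<inter> S \<noteq> {}}. w j)"
  define Y where "Y = E M (C - S)"
  define e where "e = E (M-1) (C - S)"
  define a where "a = (\<Sum>c\<in>S. nuh c)"
  define b where "b = (\<Sum>c\<in>C - S. nuh c)"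
  have ab: "a + b = 1" unfolding a_def b_def using sum.subset_diff[OF S finC, of nuh] sum1 by simp
  have a0: "a \<ge> 0" unfolding a_def using pos S by (intro sum_nonneg) (auto intro: less_imp_le)
  have b0: "b \<ge> 0" unfolding b_def using pos by (intro sum_nonneg) (auto intro: less_imp_le)
  have X1: "X \<ge> a * e" unfolding X_def a_def e_def by (rule X_ge[OF S])
  have Y1: "Y \<le> b * e" unfolding Y_def b_def e_def by (rule E_le) auto
  have ZXY: "placement_Z C nuh M = X + Y"
  proof -
    have un: "Js = {j. j \<subseteq> C \<and> card j = M \<and> j \<inter> S \<noteq> {}} \<union> {j. j \<subseteq> C - S \<and> card j = M}"
      unfolding Js_def by auto
    have "sum w Js = X + Y" unfolding un X_def Y_def E_def
      by (rule sum.union_disjoint) (use fin_subsets[OF finC] fin_subsets[OF finite_Diff[OF finC]] in auto)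
    then show ?thesis using Z_eq by simp
  qed
  have "b * X \<ge> b * (a * e)" using X1 b0 by (rule mult_left_mono)
  moreover have "a * Y \<le> a * (b * e)" using Y1 a0 by (rule mult_left_mono)
  ultimately have "b * X \<ge> a * Y" by (simp add: algebra_simps)
  then have "X \<ge> a * (X + Y)" using ab by (simp add: algebra_simps) (metis add.commute add_le_cancel_left distrib_right mult_1 mult.commute)
  then have "X / placement_Z C nuh M \<ge> a" using Z_pos ZXY by (simp add: pos_le_divide_eq mult.commute)
  then have "real U * real B * (X / placement_Z C nuh M) \<ge> real U * real B * a" by (intro mult_left_mono) auto
  then show ?thesis unfolding cap_eq X_def a_def by simp
qed

lemma cap_C: "link_cap C nuh M U B C = real U * real B"
proof -
  have "{j. j \<subseteq> C \<and> card j = M \<and> j \<inter> C \<noteq> {}} = Js"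
  proof -
    have "j \<inter> C \<noteq> {}" if "j \<subseteq> C" "card j = M" for j
    proof
      assume "j \<inter> C = {}"
      then have "j = {}" using that by blast
      then show False using that M1 by simp
    qed
    then show ?thesis unfolding Js_def by blast
  qed
  then show ?thesis unfolding cap_eq using Z_eq Z_pos by simp
qed

end

context LN begin

definition NN :: "nat \<Rightarrow> real" where "NN B = real U * real B"
definition nu :: "nat \<Rightarrow> 'a \<Rightarrow> real" where "nu B d = arr_rate nuh U \<rho> B d"
definition FF where "FF B = feasible C nuh M U B"
definition pw :: "nat \<Rightarrow> ('a \<Rightarrow> nat) \<Rightarrow> real" where
  "pw B n = (\<Prod>d\<in>C. nu B d ^ n d / fact (n d))"
definition GG where "GG B = (\<Sum>n\<in>FF B. pw B n)"
definition pst where "pst B n = (if n \<in> FF B then pw B n / GG B else 0)"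

lemma nu_eq: "nu B d = \<rho> * NN B * nuh d"
  unfolding nu_def arr_rate_def NN_def by simp

lemma nu_nonneg: "d \<in> C \<Longrightarrow> 0 \<le> nu B d"
proof -
  assume d: "d \<in> C"
  have "0 \<le> NN B" unfolding NN_def by simp
  moreover have "0 \<le> nuh d" using pos d by (auto intro: less_imp_le)
  ultimately show ?thesis unfolding nu_eq using rho by simp
qed

lemma NN_pos: "1 \<le> B \<Longrightarrow> 0 < NN B"
  unfolding NN_def using U1 by simp

lemma nu_pos: "d \<in> C \<Longrightarrow> 1 \<le> B \<Longrightarrow> 0 < nu B d"
  unfolding nu_eq using rho pos NN_pos by (auto intro!: mult_pos_pos)

lemma cap_nonneg: "S \<subseteq> C \<Longrightarrow> 0 \<le> link_cap C nuh M U B S"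
proof -
  assume S: "S \<subseteq> C"
  have "0 \<le> (\<Sum>c\<in>S. nuh c)" using pos S by (intro sum_nonneg) (auto intro: less_imp_le)
  then have "0 \<le> real U * real B * (\<Sum>c\<in>S. nuh c)" by simp
  then show ?thesis using cap_ge[OF S, of B] by linarith
qed

lemma FF_iff: "n \<in> FF B \<longleftrightarrow> (\<forall>c. c \<notin> C \<longrightarrow> n c = 0) \<and>
         (\<forall>S. S \<subseteq> C \<longrightarrow> real (\<Sum>c\<in>S. n c) \<le> link_cap C nuh M U B S)"
  unfolding FF_def feasible_def by simp

lemma FF_zero: "n \<in> FF B \<Longrightarrow> c \<notin> C \<Longrightarrow> n c = 0"
  using FF_iff by blast

lemma FF_tot: "n \<in> FF B \<Longrightarrow> real (\<Sum>c\<in>C. n c) \<le> NN B"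
  using FF_iff[of n B] cap_C[of B] unfolding NN_def by auto

lemma FF_bound: "n \<in> FF B \<Longrightarrow> real (n d) \<le> NN B"
proof (cases "d \<in> C")
  case True
  assume n: "n \<in> FF B"
  have "n d \<le> (\<Sum>c\<in>C. n c)" using True finC by (intro member_le_sum) auto
  then show ?thesis using FF_tot[OF n] by linarith
next
  case False
  assume n: "n \<in> FF B"
  then show ?thesis using FF_zero[OF n False] NN_def by simp
qed

lemma FF_down: assumes n: "n \<in> FF B" and le: "\<And>d. m d \<le> n d" shows "m \<in> FF B"
  unfolding FF_iff
proof safe
  fix c assume "c \<notin> C" then show "m c = 0" using le[of c] FF_zero[OF n] by fastforce
next
  fix S assume S: "S \<subseteq> C"
  have "(\<Sum>c\<in>S. m c) \<le> (\<Sum>c\<in>S. n c)" by (intro sum_mono le)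
  then show "real (\<Sum>c\<in>S. m c) \<le> link_cap C nuh M U B S" using n S FF_iff[of n B]
    by (meson of_nat_le_iff order_trans)
qed

lemma zero_FF: "(\<lambda>_. 0) \<in> FF B"
  unfolding FF_iff using cap_nonneg by auto

lemma FF_finite: "finite (FF B)"
proof -
  define K where "K = nat \<lceil>NN B\<rceil>"
  have "FF B \<subseteq> {f. \<forall>x. (x \<in> C \<longrightarrow> f x \<in> {0..K}) \<and> (x \<notin> C \<longrightarrow> f x = 0)}"
  proof safe
    fix n x assume n: "n \<in> FF B" 
    have "real (n x) \<le> NN B" by (rule FF_bound[OF n])
    then show "n x \<in> {0..K}" unfolding K_def by (simp add: le_nat_iff ceiling_le_iff le_ceiling_iff)
  next
    fix n x assume "n \<in> FF B" "x \<notin> C" then show "n x = 0" using FF_zero by blast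
  qed
  moreover have "finite {f. \<forall>x. (x \<in> C \<longrightarrow> f x \<in> {0..K}) \<and> (x \<notin> C \<longrightarrow> f x = (0::nat))}"
    by (rule finite_set_of_finite_funs) (use finC in auto)
  ultimately show ?thesis using finite_subset by blast
qed

lemma pw_nonneg: "0 \<le> pw B n"
  unfolding pw_def using nu_nonneg by (intro prod_nonneg) auto

lemma pw_pos: "1 \<le> B \<Longrightarrow> 0 < pw B n"
  unfolding pw_def using nu_pos by (intro prod_pos) auto

lemma pw_zero: "pw B (\<lambda>_. 0) = 1"
  unfolding pw_def by simp

lemma GG_pos: "GG B \<ge> 1"
proof -
  have "pw B (\<lambda>_. 0) \<le> GG B" unfolding GG_def
    by (rule member_le_sum) (use zero_FF FF_finite pw_nonneg in auto)
  then show ?thesis using pw_zero by simp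
qed

lemma GG_pos': "0 < GG B" using GG_pos[of B] by linarith

lemma pw_up:
  assumes c: "c \<in> C"
  shows "pw B (n(c := n c + 1)) * real (n c + 1) = nu B c * pw B n"
proof -
  have r0: "(\<Prod>d\<in>C - {c}. nu B d ^ (n(c := n c + 1)) d / fact ((n(c := n c + 1)) d)) = (\<Prod>d\<in>C - {c}. nu B d ^ n d / fact (n d))"
    by (rule prod.cong) auto
  have r1: "pw B (n(c := n c + 1)) = nu B c ^ (n c + 1) / fact (n c + 1) * (\<Prod>d\<in>C - {c}. nu B d ^ n d / fact (n d))"
    unfolding pw_def prod.remove[OF finC c] r0[symmetric] by simp
  have r2: "pw B n = nu B c ^ n c / fact (n c) * (\<Prod>d\<in>C - {c}. nu B d ^ n d / fact (n d))"
    unfolding pw_def by (rule prod.remove[OF finC c])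
  have f: "(fact (n c + 1) :: real) = real (n c + 1) * fact (n c)" by simp
  have f0: "(fact (n c) :: real) \<noteq> 0" by simp
  have "nu B c ^ (n c + 1) / fact (n c + 1) * real (n c + 1) = nu B c * (nu B c ^ n c / fact (n c))"
    unfolding f using f0 by (simp add: field_simps del: of_nat_Suc)
  then show ?thesis unfolding r1 r2 by (metis (no_types, lifting) mult.assoc mult.commute)
qed

lemma pw_down:
  assumes c: "c \<in> C" and p: "0 < n c"
  shows "nu B c * pw B (n(c := n c - 1)) = real (n c) * pw B n"
proof -
  let ?m = "n(c := n c - 1)"
  have "?m(c := ?m c + 1) = n" using p by auto
  moreover have "real (?m c + 1) = real (n c)" using p by simp
  ultimately show ?thesis using pw_up[OF c, of B ?m] by (simp add: mult.commute)
qed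

lemma pst_stationary: "stationary C nuh M U \<rho> B (pst B)"
  unfolding stationary_def Let_def FF_def[symmetric] nu_def[symmetric]
proof (intro conjI ballI allI impI)
  fix n show "0 \<le> pst B n" unfolding pst_def using pw_nonneg GG_pos'
    by (auto intro!: divide_nonneg_pos)
next
  fix n assume "n \<notin> FF B" then show "pst B n = 0" unfolding pst_def by simp
next
  show "(\<Sum>n\<in>FF B. pst B n) = 1" unfolding pst_def using GG_pos
    using GG_pos'[of B] by (simp add: sum_divide_distrib[symmetric] GG_def)
next
  fix n assume n: "n \<in> FF B"
  have t1: "(if 0 < n c \<and> n(c := n c - 1) \<in> FF B then nu B c * pst B (n(c := n c - 1)) else 0)
        = real (n c) * pst B n" if c: "c \<in> C" for c
  proof (cases "0 < n c")
    case True
    have "n(c := n c - 1) \<in> FF B" by (rule FF_down[OF n]) auto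
    then show ?thesis using True pw_down[of c n B, OF c True] n unfolding pst_def by simp
  qed simp
  have t2: "(if n(c := n c + 1) \<in> FF B then real (n c + 1) * pst B (n(c := n c + 1)) else 0)
        = (if n(c := n c + 1) \<in> FF B then nu B c else 0) * pst B n" if c: "c \<in> C" for c
    using pw_up[OF c, of B n] n unfolding pst_def by (simp add: mult.commute)
  show "pst B n * ((\<Sum>c\<in>C. if n(c := n c + 1) \<in> FF B then nu B c else 0) + (\<Sum>c\<in>C. real (n c))) =
         (\<Sum>c\<in>C. if 0 < n c \<and> n(c := n c - 1) \<in> FF B then nu B c * pst B (n(c := n c - 1)) else 0) +
         (\<Sum>c\<in>C. if n(c := n c + 1) \<in> FF B then real (n c + 1) * pst B (n(c := n c + 1)) else 0)"
  proof -
    have s1: "(\<Sum>c\<in>C. if 0 < n c \<and> n(c := n c - 1) \<in> FF B then nu B c * pst B (n(c := n c - 1)) else 0)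
      = (\<Sum>c\<in>C. real (n c) * pst B n)" by (rule sum.cong[OF refl t1])
    have s2: "(\<Sum>c\<in>C. if n(c := n c + 1) \<in> FF B then real (n c + 1) * pst B (n(c := n c + 1)) else 0)
      = (\<Sum>c\<in>C. (if n(c := n c + 1) \<in> FF B then nu B c else 0) * pst B n)" by (rule sum.cong[OF refl t2])
    show ?thesis unfolding s1 s2 by (simp add: sum_distrib_left sum_distrib_right algebra_simps)
  qed
qed

end

context LN begin

definition hexpr :: "nat \<Rightarrow> (('a \<Rightarrow> nat) \<Rightarrow> real) \<Rightarrow> ('a \<Rightarrow> nat) \<Rightarrow> real" where
  "hexpr B h n = (\<Sum>c\<in>C. real (n c) * (h n - h (n(c := n c - 1)))) +
     (\<Sum>c\<in>C. if n(c := n c + 1) \<in> FF B then nu B c * (h n - h (n(c := n c + 1))) else 0)"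

definition harmonic where "harmonic B h \<longleftrightarrow> (\<forall>n\<in>FF B. hexpr B h n = 0)"

lemma harmonic_neg: "harmonic B h \<Longrightarrow> harmonic B (\<lambda>x. - h x)"
proof -
  have "hexpr B (\<lambda>x. - h x) n = - hexpr B h n" for n
  proof -
    have a: "(\<Sum>c\<in>C. real (n c) * (- h n - - h (n(c := n c - 1)))) = - (\<Sum>c\<in>C. real (n c) * (h n - h (n(c := n c - 1))))"
      unfolding sum_negf[symmetric] by (rule sum.cong) (auto simp: right_diff_distrib)
    have b: "(\<Sum>c\<in>C. if n(c := n c + 1) \<in> FF B then nu B c * (- h n - - h (n(c := n c + 1))) else 0)
       = - (\<Sum>c\<in>C. if n(c := n c + 1) \<in> FF B then nu B c * (h n - h (n(c := n c + 1))) else 0)"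
      unfolding sum_negf[symmetric] by (rule sum.cong) (auto simp: right_diff_distrib)
    show ?thesis unfolding hexpr_def a b by simp
  qed
  then show "harmonic B h \<Longrightarrow> harmonic B (\<lambda>x. - h x)" unfolding harmonic_def by simp
qed

lemma harm_max:
  assumes hh: "harmonic B h" and n: "n \<in> FF B" and mx: "\<forall>m\<in>FF B. h m \<le> h n"
    and c: "c \<in> C" and p: "0 < n c"
  shows "h (n(c := n c - 1)) = h n"
proof -
  define t where "t = (\<lambda>c. real (n c) * (h n - h (n(c := n c - 1))))"
  define s where "s = (\<lambda>c. if n(c := n c + 1) \<in> FF B then nu B c * (h n - h (n(c := n c + 1))) else 0)"
  have t0: "\<forall>c\<in>C. 0 \<le> t c"
  proof
    fix c assume "c \<in> C"
    have "n(c := n c - 1) \<in> FF B" by (rule FF_down[OF n]) auto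
    then have "h (n(c := n c - 1)) \<le> h n" using mx by blast
    then show "0 \<le> t c" unfolding t_def by (intro mult_nonneg_nonneg) auto
  qed
  have s0: "\<forall>c\<in>C. 0 \<le> s c"
  proof
    fix c assume c: "c \<in> C"
    show "0 \<le> s c"
    proof (cases "n(c := n c + 1) \<in> FF B")
      case True
      then have "h (n(c := n c + 1)) \<le> h n" using mx by blast
      then show ?thesis using True nu_nonneg[OF c, of B] unfolding s_def by simp
    qed (simp add: s_def)
  qed
  have "hexpr B h n = 0" using hh n unfolding harmonic_def by blast
  then have e: "sum t C + sum s C = 0" unfolding hexpr_def t_def s_def .
  have "0 \<le> sum t C" using t0 by (intro sum_nonneg) blast
  moreover have "0 \<le> sum s C" using s0 by (intro sum_nonneg) blast
  ultimately have "sum t C = 0" using e by linarith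
  then have "\<forall>c\<in>C. t c = 0" using sum_nonneg_eq_0_iff[OF finC] t0 by blast
  then have "t c = 0" using c by blast
  then have "h n - h (n(c := n c - 1)) = 0" unfolding t_def using p by simp
  then show ?thesis by simp
qed

lemma harm_to_zero:
  assumes hh: "harmonic B h"
  shows "n \<in> FF B \<Longrightarrow> \<forall>m\<in>FF B. h m \<le> h n \<Longrightarrow> h (\<lambda>_. 0) = h n"
proof (induction "\<Sum>c\<in>C. n c" arbitrary: n rule: less_induct)
  case less
  show ?case
  proof (cases "\<exists>c\<in>C. 0 < n c")
    case False
    have "n x = 0" for x using False FF_zero[OF less.prems(1), of x] by (cases "x \<in> C") auto
    then have "n = (\<lambda>_. 0)" by (rule ext)
    then show ?thesis by simp
  next
    case True
    then obtain c where c: "c \<in> C" "0 < n c" by blast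
    let ?m = "n(c := n c - 1)"
    have m: "?m \<in> FF B" by (rule FF_down[OF less.prems(1)]) auto
    have hm: "h ?m = h n" by (rule harm_max[OF hh less.prems c])
    have "(\<Sum>d\<in>C. ?m d) < (\<Sum>d\<in>C. n d)"
      by (rule sum_strict_mono_ex1[OF finC]) (use c in auto)
    then have "h (\<lambda>_. 0) = h ?m" using less.hyps[OF _ m] less.prems(2) hm by simp
    then show ?thesis using hm by simp
  qed
qed

lemma harm_const:
  assumes hh: "harmonic B h" and n: "n \<in> FF B"
  shows "h n = h (\<lambda>_. 0)"
proof -
  have ne: "FF B \<noteq> {}" using zero_FF by blast
  have up: "h m \<le> h (\<lambda>_. 0)" if m: "m \<in> FF B" and hh: "harmonic B h" for m h
  proof -
    have "Max (h ` FF B) \<in> h ` FF B" using FF_finite ne by (intro Max_in) auto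
    then obtain x where x: "x \<in> FF B" "h x = Max (h ` FF B)" by auto
    have mx: "\<forall>m\<in>FF B. h m \<le> h x" using x FF_finite by auto
    have "h (\<lambda>_. 0) = h x" by (rule harm_to_zero[OF hh x(1) mx])
    then show ?thesis using mx m by simp
  qed
  have "h n \<le> h (\<lambda>_. 0)" by (rule up[OF n hh])
  moreover have "- h n \<le> - h (\<lambda>_. 0)" by (rule up[OF n harmonic_neg[OF hh]])
  ultimately show ?thesis by linarith
qed

lemma stat_unique:
  assumes B: "1 \<le> B" and st: "stationary C nuh M U \<rho> B \<pi>"
  shows "\<pi> = pst B"
proof -
  have st': "(\<forall>n. \<pi> n \<ge> 0) \<and> (\<forall>n. n \<notin> FF B \<longrightarrow> \<pi> n = 0) \<and> (\<Sum>n\<in>FF B. \<pi> n) = 1 \<and>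
       (\<forall>n\<in>FF B.
          \<pi> n * ((\<Sum>c\<in>C. if n(c := n c + 1) \<in> FF B then nu B c else 0) + (\<Sum>c\<in>C. real (n c)))
          = (\<Sum>c\<in>C. if 0 < n c \<and> n(c := n c - 1) \<in> FF B then nu B c * \<pi> (n(c := n c - 1)) else 0)
            + (\<Sum>c\<in>C. if n(c := n c + 1) \<in> FF B
                        then real (n c + 1) * \<pi> (n(c := n c + 1)) else 0))"
    using st unfolding stationary_def Let_def FF_def[symmetric] nu_def[symmetric] .
  define h where "h n = \<pi> n / pw B n" for n
  have pih: "\<pi> n = h n * pw B n" for n using pw_pos[OF B, of n] unfolding h_def by simp
  have hh: "harmonic B h" unfolding harmonic_def
  proof
    fix n assume n: "n \<in> FF B"
    have e1: "(if 0 < n c \<and> n(c := n c - 1) \<in> FF B then nu B c * \<pi> (n(c := n c - 1)) else 0)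
       = pw B n * (real (n c) * h (n(c := n c - 1)))" if c: "c \<in> C" for c
    proof (cases "0 < n c")
      case True
      have "n(c := n c - 1) \<in> FF B" by (rule FF_down[OF n]) auto
      then show ?thesis using True pw_down[of c n B, OF c True] unfolding pih by (simp add: algebra_simps)
    qed simp
    have e2: "(if n(c := n c + 1) \<in> FF B then real (n c + 1) * \<pi> (n(c := n c + 1)) else 0)
       = pw B n * (if n(c := n c + 1) \<in> FF B then nu B c * h (n(c := n c + 1)) else 0)" if c: "c \<in> C" for c
    proof -
      have "real (n c + 1) * \<pi> (n(c := n c + 1)) = h (n(c := n c + 1)) * (pw B (n(c := n c + 1)) * real (n c + 1))"
        unfolding pih by (simp only: mult_ac)
      also have "\<dots> = pw B n * (nu B c * h (n(c := n c + 1)))" unfolding pw_up[OF c] by (simp only: mult_ac)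
      finally show ?thesis by simp
    qed
    define A where "A = (\<Sum>c\<in>C. if n(c := n c + 1) \<in> FF B then nu B c else 0)"
    define Bs where "Bs = (\<Sum>c\<in>C. real (n c))"
    define D where "D = (\<Sum>c\<in>C. real (n c) * h (n(c := n c - 1)))"
    define Uu where "Uu = (\<Sum>c\<in>C. if n(c := n c + 1) \<in> FF B then nu B c * h (n(c := n c + 1)) else 0)"
    have b0: "\<pi> n * (A + Bs) = (\<Sum>c\<in>C. if 0 < n c \<and> n(c := n c - 1) \<in> FF B then nu B c * \<pi> (n(c := n c - 1)) else 0)
            + (\<Sum>c\<in>C. if n(c := n c + 1) \<in> FF B
                        then real (n c + 1) * \<pi> (n(c := n c + 1)) else 0)"
      using st' n unfolding A_def Bs_def by blast
    have r1: "(\<Sum>c\<in>C. if 0 < n c \<and> n(c := n c - 1) \<in> FF B then nu B c * \<pi> (n(c := n c - 1)) else 0) = pw B n * D"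
      unfolding D_def sum_distrib_left by (rule sum.cong[OF refl e1])
    have r2: "(\<Sum>c\<in>C. if n(c := n c + 1) \<in> FF B
                        then real (n c + 1) * \<pi> (n(c := n c + 1)) else 0) = pw B n * Uu"
      unfolding Uu_def sum_distrib_left by (rule sum.cong[OF refl e2])
    have bal: "\<pi> n * (A + Bs) = pw B n * D + pw B n * Uu" using b0 unfolding r1 r2 .
    have s1: "(\<Sum>c\<in>C. real (n c) * (h n - h (n(c := n c - 1)))) = h n * Bs - D"
      unfolding Bs_def D_def by (simp add: right_diff_distrib sum_subtractf sum_distrib_left mult_ac)
    have tw: "(if n(c := n c + 1) \<in> FF B then nu B c * (h n - h (n(c := n c + 1))) else 0)
       = h n * (if n(c := n c + 1) \<in> FF B then nu B c else 0) - (if n(c := n c + 1) \<in> FF B then nu B c * h (n(c := n c + 1)) else 0)" for c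
      by (simp add: algebra_simps)
    have s2: "(\<Sum>c\<in>C. if n(c := n c + 1) \<in> FF B then nu B c * (h n - h (n(c := n c + 1))) else 0) = h n * A - Uu"
      unfolding tw A_def Uu_def by (simp only: sum_subtractf sum_distrib_left)
    have "pw B n * hexpr B h n = (h n * pw B n) * (A + Bs) - pw B n * D - pw B n * Uu"
      unfolding hexpr_def s1 s2 by (simp add: algebra_simps)
    also have "\<dots> = 0" using bal unfolding pih by simp
    finally have "pw B n * hexpr B h n = 0" .
    then show "hexpr B h n = 0" using pw_pos[OF B, of n] by simp
  qed
  define h0 where "h0 = h (\<lambda>_. 0)"
  have onF: "\<pi> n = h0 * pw B n" if "n \<in> FF B" for n using harm_const[OF hh that] pih h0_def by simp
  have s1: "sum \<pi> (FF B) = 1" using st' by blast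
  have z: "\<forall>n. n \<notin> FF B \<longrightarrow> \<pi> n = 0" using st' by blast
  have "sum \<pi> (FF B) = (\<Sum>n\<in>FF B. h0 * pw B n)" by (rule sum.cong[OF refl onF])
  then have "1 = (\<Sum>n\<in>FF B. h0 * pw B n)" using s1 by simp
  then have "h0 * GG B = 1" unfolding GG_def sum_distrib_left by simp
  then have h0: "h0 = 1 / GG B" using GG_pos'[of B] by (simp add: field_simps)
  show ?thesis
  proof
    fix n show "\<pi> n = pst B n"
    proof (cases "n \<in> FF B")
      case True then show ?thesis using onF[OF True] h0 unfolding pst_def by simp
    next
      case False then show ?thesis using z unfolding pst_def by simp
    qed
  qed
qed

lemma the_pst: "1 \<le> B \<Longrightarrow> (THE \<pi>. stationary C nuh M U \<rho> B \<pi>) = pst B"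
  using pst_stationary stat_unique by (intro the_equality) auto

lemma accept_eq: "1 \<le> B \<Longrightarrow> accept_prob C nuh M U \<rho> B c = (\<Sum>n\<in>{n\<in>FF B. n(c := n c + 1) \<in> FF B}. pst B n)"
  unfolding accept_prob_def Let_def FF_def[symmetric] by (simp add: the_pst)

end

context LN begin

definition mn where "mn = min \<rho> 1"
definition rr where "rr = max \<rho> 1"
definition aa where "aa B d = mn * NN B * nuh d"
definition n0 where "n0 B = (\<lambda>d. if d \<in> C then nat \<lfloor>aa B d\<rfloor> else 0)"

lemma mn_pos: "0 < mn" unfolding mn_def using rho by simp
lemma mn_le1: "mn \<le> 1" unfolding mn_def by simp
lemma rr_ge1: "1 \<le> rr" unfolding rr_def by simp
lemma rho_eq: "\<rho> = rr * mn" unfolding rr_def mn_def by (cases "\<rho> \<le> 1") (simp_all add: max_def min_def)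
lemma nu_aa: "nu B d = rr * aa B d"
proof -
  have "nu B d = (rr * mn) * NN B * nuh d" unfolding nu_eq by (simp only: rho_eq[symmetric])
  then show ?thesis unfolding aa_def by (simp only: mult_ac)
qed

lemma nuh_le1: "d \<in> C \<Longrightarrow> nuh d \<le> 1"
proof -
  assume d: "d \<in> C"
  have "nuh d \<le> sum nuh C" by (rule member_le_sum) (use d pos finC in \<open>auto intro: less_imp_le\<close>)
  then show ?thesis using sum1 by simp
qed

lemma aa_nonneg: "d \<in> C \<Longrightarrow> 0 \<le> aa B d"
proof -
  assume d: "d \<in> C"
  have "0 \<le> nuh d" using pos d by (auto intro: less_imp_le)
  moreover have "0 \<le> NN B" unfolding NN_def by simp
  ultimately show ?thesis unfolding aa_def using mn_pos by simp
qed

lemma aa_le: "d \<in> C \<Longrightarrow> aa B d \<le> NN B"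
proof -
  assume d: "d \<in> C"
  have "mn * nuh d \<le> 1 * 1" using mn_le1 nuh_le1[OF d] pos d mn_pos by (intro mult_mono) auto
  then have "mn * nuh d * NN B \<le> NN B" using mult_right_mono[of "mn * nuh d" 1 "NN B"] NN_def by simp
  then show ?thesis unfolding aa_def by (simp add: mult_ac)
qed

lemma n0_le: "real (n0 B d) \<le> aa B d" if "d \<in> C"
  using aa_nonneg[OF that] that unfolding n0_def by simp

lemma n0_ge: "aa B d - 1 < real (n0 B d)" if "d \<in> C"
proof -
  have "real (n0 B d) = real_of_int \<lfloor>aa B d\<rfloor>" using aa_nonneg[OF that] that unfolding n0_def by simp
  then show ?thesis using floor_correct[of "aa B d"] by linarith
qed

lemma n0_FF: "n0 B \<in> FF B"
  unfolding FF_iff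
proof safe
  fix c assume "c \<notin> C" then show "n0 B c = 0" unfolding n0_def by simp
next
  fix S assume S: "S \<subseteq> C"
  have "real (\<Sum>c\<in>S. n0 B c) = (\<Sum>c\<in>S. real (n0 B c))" by simp
  also have "\<dots> \<le> (\<Sum>c\<in>S. aa B c)" using S n0_le by (intro sum_mono) auto
  also have "\<dots> = mn * (NN B * (\<Sum>c\<in>S. nuh c))" unfolding aa_def sum_distrib_left[symmetric] by (simp only: mult.assoc)
  also have "\<dots> \<le> 1 * (NN B * (\<Sum>c\<in>S. nuh c))"
  proof (rule mult_right_mono)
    show "mn \<le> 1" by (rule mn_le1)
    have "0 \<le> (\<Sum>c\<in>S. nuh c)" using S pos by (intro sum_nonneg) (auto intro: less_imp_le)
    then show "0 \<le> NN B * (\<Sum>c\<in>S. nuh c)" unfolding NN_def by simp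
  qed
  also have "\<dots> \<le> link_cap C nuh M U B S" using cap_ge[OF S, of B] unfolding NN_def by simp
  finally show "real (\<Sum>c\<in>S. n0 B c) \<le> link_cap C nuh M U B S" .
qed

lemma pst_nonneg: "0 \<le> pst B n"
  unfolding pst_def using pw_nonneg GG_pos' by (auto intro!: divide_nonneg_pos)

lemma pst_sum: "(\<Sum>n\<in>FF B. pst B n) = 1"
  unfolding pst_def using GG_pos'[of B] by (simp add: sum_divide_distrib[symmetric] GG_def)

lemma mean_eq:
  assumes B: "1 \<le> B" and c: "c \<in> C"
  shows "nu B c * accept_prob C nuh M U \<rho> B c = (\<Sum>n\<in>FF B. real (n c) * pst B n)"
proof -
  define Q where "Q = {n \<in> FF B. n(c := n c + 1) \<in> FF B}"
  define up where "up = (\<lambda>n::'a\<Rightarrow>nat. n(c := n c + 1))"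
  have inj: "inj_on up Q"
  proof (rule inj_onI)
    fix x y assume "up x = up y"
    then have "(up x)(c := up x c - 1) = (up y)(c := up y c - 1)" by simp
    then show "x = y" unfolding up_def by simp
  qed
  have img: "up ` Q = {n \<in> FF B. 0 < n c}"
  proof
    show "up ` Q \<subseteq> {n \<in> FF B. 0 < n c}" unfolding up_def Q_def by auto
    show "{n \<in> FF B. 0 < n c} \<subseteq> up ` Q"
    proof
      fix n assume n: "n \<in> {n \<in> FF B. 0 < n c}"
      let ?m = "n(c := n c - 1)"
      have "?m \<in> FF B" by (rule FF_down) (use n in auto)
      moreover have "up ?m = n" using n unfolding up_def by auto
      ultimately have "?m \<in> Q" using n unfolding Q_def up_def by simp
      then show "n \<in> up ` Q" using \<open>up ?m = n\<close> by (metis image_eqI)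
    qed
  qed
  have "(\<Sum>n\<in>FF B. real (n c) * pst B n) = (\<Sum>n\<in>{n \<in> FF B. 0 < n c}. real (n c) * pst B n)"
    by (rule sum.mono_neutral_right) (use FF_finite in auto)
  also have "\<dots> = (\<Sum>m\<in>Q. real (up m c) * pst B (up m))"
    unfolding img[symmetric] by (rule sum.reindex[OF inj, unfolded comp_def])
  also have "\<dots> = (\<Sum>m\<in>Q. nu B c * pst B m)"
  proof (rule sum.cong)
    fix m assume m: "m \<in> Q"
    have "real (up m c) * pst B (up m) = (pw B (m(c := m c + 1)) * real (m c + 1)) / GG B"
      using m unfolding Q_def up_def pst_def by simp
    also have "\<dots> = nu B c * pst B m" using m unfolding pw_up[OF c] Q_def pst_def by simp
    finally show "real (up m c) * pst B (up m) = nu B c * pst B m" .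
  qed simp
  also have "\<dots> = nu B c * accept_prob C nuh M U \<rho> B c"
    unfolding accept_eq[OF B] Q_def sum_distrib_left ..
  finally show ?thesis by simp
qed

lemma sum_means: "(\<Sum>c\<in>C. (\<Sum>n\<in>FF B. real (n c) * pst B n)) \<le> NN B"
proof -
  have "(\<Sum>c\<in>C. (\<Sum>n\<in>FF B. real (n c) * pst B n)) = (\<Sum>n\<in>FF B. pst B n * real (\<Sum>c\<in>C. n c))"
  proof (subst sum.swap, rule sum.cong[OF refl])
    fix x show "(\<Sum>c\<in>C. real (x c) * pst B x) = pst B x * real (sum x C)"
      using sum_distrib_right[of "\<lambda>c. real (x c)" C "pst B x", symmetric] by (simp add: mult.commute)
  qed
  also have "\<dots> \<le> (\<Sum>n\<in>FF B. pst B n * NN B)"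
    by (rule sum_mono) (use FF_tot pst_nonneg in \<open>auto intro: mult_left_mono\<close>)
  also have "\<dots> = NN B" using pst_sum[of B] by (simp add: sum_distrib_right[symmetric])
  finally show ?thesis .
qed

lemma lower_mean:
  assumes th: "0 \<le> \<theta>" and c: "c \<in> C"
  shows "(\<Sum>n\<in>FF B. real (n c) * pst B n) \<ge>
     \<theta> * aa B c * (1 - (\<Sum>n\<in>{n\<in>FF B. real (n c) \<le> \<theta> * aa B c}. pst B n))"
proof -
  let ?bad = "{n\<in>FF B. real (n c) \<le> \<theta> * aa B c}"
  let ?good = "{n\<in>FF B. \<not> real (n c) \<le> \<theta> * aa B c}"
  have fin: "finite (FF B)" by (rule FF_finite)
  have un: "FF B = ?bad \<union> ?good" by auto
  have split: "(\<Sum>n\<in>FF B. pst B n) = (\<Sum>n\<in>?bad. pst B n) + (\<Sum>n\<in>?good. pst B n)"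
    by (subst un, rule sum.union_disjoint) (use fin in auto)
  have g: "(\<Sum>n\<in>?good. pst B n) = 1 - (\<Sum>n\<in>?bad. pst B n)" using split pst_sum[of B] by linarith
  have "\<theta> * aa B c * (1 - (\<Sum>n\<in>?bad. pst B n)) = (\<Sum>n\<in>?good. \<theta> * aa B c * pst B n)"
    unfolding sum_distrib_left[symmetric] g ..
  also have "\<dots> \<le> (\<Sum>n\<in>?good. real (n c) * pst B n)"
    by (rule sum_mono) (use pst_nonneg in \<open>auto intro: mult_right_mono\<close>)
  also have "\<dots> \<le> (\<Sum>n\<in>FF B. real (n c) * pst B n)"
    by (rule sum_mono2) (use fin pst_nonneg in auto)
  finally show ?thesis .
qed

end

context LN begin

lemma ln_pw: "1 \<le> B \<Longrightarrow> ln (pw B n) = (\<Sum>d\<in>C. real (n d) * ln (nu B d) - ln (fact (n d)))"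
proof -
  assume B: "1 \<le> B"
  have "ln (pw B n) = (\<Sum>d\<in>C. ln (nu B d ^ n d / fact (n d)))"
    unfolding pw_def
  proof (rule ln_prod[OF finC])
    fix i assume "i \<in> C"
    then have "0 < nu B i" using nu_pos[OF _ B] by blast
    then show "nu B i ^ n i / fact (n i) \<noteq> 0" by simp
  qed
  also have "\<dots> = (\<Sum>d\<in>C. real (n d) * ln (nu B d) - ln (fact (n d)))"
  proof (rule sum.cong[OF refl])
    fix d assume d: "d \<in> C"
    have "ln (nu B d ^ n d / fact (n d)) = ln (nu B d ^ n d) - ln (fact (n d))"
      using nu_pos[OF d B] by (intro ln_divide_pos) auto
    then show "ln (nu B d ^ n d / fact (n d)) = real (n d) * ln (nu B d) - ln (fact (n d))"
      by (simp add: ln_realpow)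
  qed
  finally show ?thesis .
qed

lemma delta_bound:
  assumes B: "1 \<le> B" and d: "d \<in> C" and big: "aa B d \<ge> 2" and n: "n \<in> FF B"
  shows "real (n d) * ln (nu B d) - ln (fact (n d)) - (real (n0 B d) * ln (nu B d) - ln (fact (n0 B d)))
    \<le> ln rr * (real (n d) - real (n0 B d)) + 2 / (mn * nuh d)
       - (real (n d) * ln (real (n d)) - real (n d) * ln (real (n0 B d)) - real (n d) + real (n0 B d))
       + ln (NN B) + 1"
proof -
  define t where "t = real (n d)"
  define s where "s = real (n0 B d)"
  define a where "a = aa B d"
  have sa: "s \<le> a" unfolding s_def a_def by (rule n0_le[OF d])
  have as: "a - 1 < s" unfolding s_def a_def by (rule n0_ge[OF d])
  have s1: "1 \<le> n0 B d" using as big unfolding s_def a_def by linarith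
  have s2: "a / 2 \<le> s" using as big unfolding a_def by linarith
  have spos: "0 < s" using s1 unfolding s_def by simp
  have apos: "0 < a" using big a_def by simp
  have NNp: "0 < NN B" by (rule NN_pos[OF B])
  have t0: "0 \<le> t" unfolding t_def by simp
  have tN: "t \<le> NN B" unfolding t_def by (rule FF_bound[OF n])
  have l1: "t * ln t - t \<le> ln (fact (n d))" unfolding t_def by (rule ln_fact_lower)
  have l2: "ln (fact (n0 B d)) \<le> (s + 1) * ln s - s + 1" unfolding s_def by (rule ln_fact_upper[OF s1])
  have lnnu: "ln (nu B d) = ln rr + ln a" unfolding nu_aa a_def using rr_ge1 apos a_def by (simp add: ln_mult)
  have g0: "0 \<le> ln a - ln s" and g1: "ln a - ln s \<le> 1 / s" using ln_ratio[OF spos sa] as by auto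
  have "(ln a - ln s) * (t - s) \<le> (ln a - ln s) * t" using g0 spos by (intro mult_left_mono) auto
  also have "\<dots> \<le> (1 / s) * t" using g1 t0 by (intro mult_right_mono) auto
  also have "\<dots> \<le> (1 / s) * NN B" using tN spos by (intro mult_left_mono) auto
  also have "\<dots> \<le> (2 / a) * NN B"
  proof (intro mult_right_mono)
    show "1 / s \<le> 2 / a" using s2 spos apos by (simp add: field_simps)
  qed (use NNp in simp)
  also have "\<dots> = 2 / (mn * nuh d)" unfolding a_def aa_def using NNp mn_pos pos d by (simp add: field_simps)
  finally have g2: "(ln a - ln s) * (t - s) \<le> 2 / (mn * nuh d)" .
  have "s \<le> NN B" using sa aa_le[OF d, of B] a_def by linarith
  then have lnsN: "ln s \<le> ln (NN B)" using spos by simp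
  have "t * ln (nu B d) - ln (fact (n d)) - (s * ln (nu B d) - ln (fact (n0 B d)))
     \<le> t * ln (nu B d) - (t * ln t - t) - (s * ln (nu B d) - ((s + 1) * ln s - s + 1))"
    using l1 l2 by linarith
  also have "\<dots> = ln rr * (t - s) + (ln a - ln s) * (t - s) - (t * ln t - t * ln s - t + s) + ln s + 1"
    unfolding lnnu by (simp add: algebra_simps)
  also have "\<dots> \<le> ln rr * (t - s) + 2 / (mn * nuh d) - (t * ln t - t * ln s - t + s) + ln (NN B) + 1"
    using g2 lnsN by linarith
  finally show ?thesis unfolding t_def s_def .
qed


lemma pt_bound:
  assumes B: "1 \<le> B" and c: "c \<in> C" and th: "0 < \<theta>" "\<theta> < 1"
    and big: "\<forall>d\<in>C. aa B d \<ge> 2" and bigc: "aa B c \<ge> ((1+\<theta>)/2) / ((1+\<theta>)/2 - \<theta>)"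
    and n: "n \<in> FF B" and bad: "real (n c) \<le> \<theta> * aa B c"
  shows "pst B n \<le> exp (ln rr * card C + (\<Sum>d\<in>C. 2/(mn*nuh d)) + card C + card C * ln (NN B)
            - ((1 - sqrt ((1+\<theta>)/2))^2 * mn * nuh c / 2) * NN B)"
proof -
  define th' where "th' = (1+\<theta>)/2"
  define Dd where "Dd d = real (n d) * ln (real (n d)) - real (n d) * ln (real (n0 B d)) - real (n d) + real (n0 B d)" for d
  define \<eta> where "\<eta> = (1 - sqrt th')^2 * mn * nuh c / 2"
  have NNp: "0 < NN B" by (rule NN_pos[OF B])
  have s1: "1 \<le> real (n0 B d)" if d: "d \<in> C" for d using n0_ge[OF d, of B] big d by auto
  have Dd0: "(sqrt (real (n0 B d)) - sqrt (real (n d)))^2 \<le> Dd d" if d: "d \<in> C" for d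
    unfolding Dd_def using D_lower[of "real (n d)" "real (n0 B d)"] s1[OF d] by simp
  have Dnn: "0 \<le> Dd d" if d: "d \<in> C" for d using Dd0[OF d] by (meson order_trans zero_le_power2)
  have Dc: "\<eta> * NN B \<le> Dd c"
  proof -
    let ?a = "aa B c" and ?s = "real (n0 B c)" and ?t = "real (n c)"
    have thd: "0 < th' - \<theta>" unfolding th'_def using th by simp
    have "th' \<le> ?a * (th' - \<theta>)" using bigc thd unfolding th'_def[symmetric] by (simp add: field_simps)
    then have "\<theta> * ?a \<le> th' * (?a - 1)" by (simp add: algebra_simps)
    also have "\<dots> \<le> th' * ?s" using n0_ge[OF c, of B] th unfolding th'_def by (intro mult_left_mono) auto
    finally have ts: "?t \<le> th' * ?s" using bad by linarith
    have th'1: "th' < 1" "0 < th'" unfolding th'_def using th by auto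
    have "sqrt ?t \<le> sqrt (th' * ?s)" using ts by simp
    then have st: "sqrt ?t \<le> sqrt th' * sqrt ?s" by (simp add: real_sqrt_mult)
    have x0: "0 \<le> (1 - sqrt th') * sqrt ?s" using th'1 by (intro mult_nonneg_nonneg) auto
    have xy: "(1 - sqrt th') * sqrt ?s \<le> sqrt ?s - sqrt ?t" using st by (simp add: algebra_simps)
    have "((1 - sqrt th') * sqrt ?s)^2 \<le> (sqrt ?s - sqrt ?t)^2" by (rule power_mono[OF xy x0])
    moreover have "((1 - sqrt th') * sqrt ?s)^2 = (1 - sqrt th')^2 * ?s" by (simp add: power_mult_distrib)
    moreover have "(1 - sqrt th')^2 * (?a / 2) \<le> (1 - sqrt th')^2 * ?s"
      using n0_ge[OF c, of B] big c by (intro mult_left_mono) auto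
    moreover have "\<eta> * NN B = (1 - sqrt th')^2 * (?a / 2)" unfolding \<eta>_def aa_def by (simp add: field_simps)
    ultimately show ?thesis using Dd0[OF c] by linarith
  qed
  have sumD: "\<eta> * NN B \<le> (\<Sum>d\<in>C. Dd d)"
  proof -
    have "Dd c \<le> (\<Sum>d\<in>C. Dd d)" by (rule member_le_sum[OF c]) (use Dnn finC in auto)
    then show ?thesis using Dc by linarith
  qed
  have lin: "ln rr * (\<Sum>d\<in>C. real (n d) - real (n0 B d)) \<le> ln rr * card C"
  proof (cases "\<rho> \<le> 1")
    case True
    then have "rr = 1" unfolding rr_def by simp
    then show ?thesis by simp
  next
    case False
    then have mn1: "mn = 1" unfolding mn_def by simp
    have sa: "(\<Sum>d\<in>C. aa B d) = NN B" unfolding aa_def mn1 using sum1 by (simp add: sum_distrib_left[symmetric])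
    have "(\<Sum>d\<in>C. aa B d - 1) \<le> (\<Sum>d\<in>C. real (n0 B d))" using n0_ge by (intro sum_mono) (auto intro: less_imp_le)
    then have s0: "NN B - card C \<le> (\<Sum>d\<in>C. real (n0 B d))" using sa by (simp add: sum_subtractf)
    have "(\<Sum>d\<in>C. real (n d)) \<le> NN B" using FF_tot[OF n] by simp
    then have "(\<Sum>d\<in>C. real (n d) - real (n0 B d)) \<le> card C" using s0 by (simp add: sum_subtractf)
    moreover have "0 \<le> ln rr" using rr_ge1 by simp
    ultimately show ?thesis by (intro mult_left_mono) auto
  qed
  define K where "K = ln rr * card C + (\<Sum>d\<in>C. 2/(mn*nuh d)) + card C"
  have "ln (pw B n) - ln (pw B (n0 B)) =
     (\<Sum>d\<in>C. real (n d) * ln (nu B d) - ln (fact (n d)) - (real (n0 B d) * ln (nu B d) - ln (fact (n0 B d))))"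
    unfolding ln_pw[OF B] by (simp add: sum_subtractf)
  also have "\<dots> \<le> (\<Sum>d\<in>C. ln rr * (real (n d) - real (n0 B d)) + 2 / (mn * nuh d) - Dd d + ln (NN B) + 1)"
    unfolding Dd_def using delta_bound[OF B _ _ n] big by (intro sum_mono) auto
  also have "\<dots> = ln rr * (\<Sum>d\<in>C. real (n d) - real (n0 B d)) + (\<Sum>d\<in>C. 2 / (mn * nuh d)) - (\<Sum>d\<in>C. Dd d) + card C * (ln (NN B) + 1)"
    by (simp add: sum.distrib sum_subtractf sum_distrib_left algebra_simps)
  also have "\<dots> \<le> K + card C * ln (NN B) - \<eta> * NN B"
    using lin sumD unfolding K_def by (simp add: algebra_simps)
  finally have Dl: "ln (pw B n) - ln (pw B (n0 B)) \<le> K + card C * ln (NN B) - \<eta> * NN B" .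
  have p0: "0 < pw B (n0 B)" by (rule pw_pos[OF B])
  have p1: "0 < pw B n" by (rule pw_pos[OF B])
  have "pw B (n0 B) \<le> GG B" unfolding GG_def
    by (rule member_le_sum[OF n0_FF]) (use pw_nonneg FF_finite in auto)
  then have "pst B n \<le> pw B n / pw B (n0 B)" unfolding pst_def using n p0 p1
    by (simp add: frac_le less_imp_le)
  also have "\<dots> = exp (ln (pw B n) - ln (pw B (n0 B)))" using p0 p1 by (simp add: exp_diff)
  also have "\<dots> \<le> exp (K + card C * ln (NN B) - \<eta> * NN B)" using Dl by simp
  finally show ?thesis unfolding K_def \<eta>_def th'_def .
qed

end

context LN begin

lemma card_FF: "real (card (FF B)) \<le> (NN B + 1) ^ card C"
proof -
  define K where "K = nat \<lfloor>NN B\<rfloor>"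
  have inj: "inj_on (\<lambda>f. restrict f C) (FF B)"
  proof (rule inj_onI)
    fix f g assume f: "f \<in> FF B" and g: "g \<in> FF B" and e: "restrict f C = restrict g C"
    show "f = g"
    proof
      fix x show "f x = g x"
      proof (cases "x \<in> C")
        case True then show ?thesis using e by (metis restrict_apply')
      next
        case False then show ?thesis using FF_zero[OF f] FF_zero[OF g] by simp
      qed
    qed
  qed
  have sub: "(\<lambda>f. restrict f C) ` FF B \<subseteq> PiE C (\<lambda>_. {0..K})"
  proof
    fix y assume "y \<in> (\<lambda>f. restrict f C) ` FF B"
    then obtain f where f: "f \<in> FF B" "y = restrict f C" by auto
    have "f x \<le> K" for x
    proof -
      have "real (f x) \<le> NN B" by (rule FF_bound[OF f(1)])
      then have "int (f x) \<le> \<lfloor>NN B\<rfloor>" by (simp add: le_floor_iff)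
      then show ?thesis unfolding K_def by linarith
    qed
    then show "y \<in> PiE C (\<lambda>_. {0..K})" using f by auto
  qed
  have "card (FF B) = card ((\<lambda>f. restrict f C) ` FF B)" using card_image[OF inj] by simp
  also have "\<dots> \<le> card (PiE C (\<lambda>_. {0..K}))"
    by (rule card_mono[OF _ sub]) (use finC in \<open>auto intro: finite_PiE\<close>)
  also have "\<dots> = (K + 1) ^ card C" using finC by (simp add: card_PiE)
  finally have "real (card (FF B)) \<le> real ((K + 1) ^ card C)" by linarith
  also have "\<dots> = (real K + 1) ^ card C" by (simp add: add.commute)
  also have "\<dots> \<le> (NN B + 1) ^ card C"
  proof (rule power_mono)
    have "0 \<le> NN B" unfolding NN_def by simp
    then show "real K + 1 \<le> NN B + 1" unfolding K_def by linarith
  qed simp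
  finally show ?thesis .
qed

lemma aa_big: "d \<in> C \<Longrightarrow> eventually (\<lambda>B. A \<le> aa B d) sequentially"
proof -
  assume d: "d \<in> C"
  define k where "k = mn * real U * nuh d"
  have k: "0 < k" unfolding k_def using mn_pos U1 pos d by simp
  have ak: "aa B d = k * real B" for B unfolding aa_def k_def NN_def by simp
  show ?thesis
  proof (rule eventually_sequentiallyI[of "nat \<lceil>A / k\<rceil>"])
    fix B assume "nat \<lceil>A / k\<rceil> \<le> B"
    then have "A / k \<le> real B" by linarith
    then show "A \<le> aa B d" unfolding ak using k by (simp add: field_simps)
  qed
qed

lemma NN_lim: "filterlim NN at_top sequentially"
proof -
  have "filterlim (\<lambda>B. real U * real B) at_top sequentially"
    by (rule filterlim_tendsto_pos_mult_at_top[OF tendsto_const _ filterlim_real_sequentially]) (use U1 in simp)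
  then show ?thesis unfolding NN_def[abs_def] .
qed

lemma conc:
  assumes c: "c \<in> C" and th: "0 < \<theta>" "\<theta> < 1"
  shows "(\<lambda>B. \<Sum>n\<in>{n\<in>FF B. real (n c) \<le> \<theta> * aa B c}. pst B n) \<longlonglongrightarrow> 0"
proof -
  define K where "K = ln rr * card C + (\<Sum>d\<in>C. 2/(mn*nuh d)) + card C"
  define \<eta> where "\<eta> = (1 - sqrt ((1+\<theta>)/2))^2 * mn * nuh c / 2"
  have "sqrt ((1+\<theta>)/2) < 1" using th by simp
  then have eta: "0 < \<eta>" unfolding \<eta>_def using mn_pos pos c by simp
  define g where "g B = exp K * ((NN B + 1) ^ (2 * card C) * exp (- \<eta> * NN B))" for B
  have glim: "g \<longlonglongrightarrow> exp K * 0"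
    unfolding g_def by (intro tendsto_mult tendsto_const filterlim_compose[OF poly_exp_lim[OF eta] NN_lim])
  have ev: "eventually (\<lambda>B. 1 \<le> B \<and> (\<forall>d\<in>C. 2 \<le> aa B d) \<and> ((1+\<theta>)/2) / ((1+\<theta>)/2 - \<theta>) \<le> aa B c) sequentially"
  proof -
    have e1: "eventually (\<lambda>B. 1 \<le> B) sequentially" by (rule eventually_ge_at_top)
    have e2: "eventually (\<lambda>B. \<forall>d\<in>C. 2 \<le> aa B d) sequentially"
      by (rule eventually_ball_finite[OF finC]) (use aa_big in blast)
    have e3: "eventually (\<lambda>B. ((1+\<theta>)/2) / ((1+\<theta>)/2 - \<theta>) \<le> aa B c) sequentially" by (rule aa_big[OF c])
    show ?thesis using eventually_conj[OF e1 eventually_conj[OF e2 e3]] by simp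
  qed
  have bound: "eventually (\<lambda>B. (\<Sum>n\<in>{n\<in>FF B. real (n c) \<le> \<theta> * aa B c}. pst B n) \<le> g B) sequentially"
    using ev
  proof (rule eventually_mono)
    fix B assume BB: "1 \<le> B \<and> (\<forall>d\<in>C. 2 \<le> aa B d) \<and> ((1+\<theta>)/2) / ((1+\<theta>)/2 - \<theta>) \<le> aa B c"
    have B: "1 \<le> B" using BB by simp
    define E where "E = exp (K + card C * ln (NN B) - \<eta> * NN B)"
    have NNp: "0 < NN B" by (rule NN_pos[OF B])
    have "(\<Sum>n\<in>{n\<in>FF B. real (n c) \<le> \<theta> * aa B c}. pst B n) \<le> (\<Sum>n\<in>{n\<in>FF B. real (n c) \<le> \<theta> * aa B c}. E)"
      unfolding E_def K_def \<eta>_def using pt_bound[OF B c th] BB by (intro sum_mono) auto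
    also have "\<dots> = real (card {n\<in>FF B. real (n c) \<le> \<theta> * aa B c}) * E" by simp
    also have "\<dots> \<le> real (card (FF B)) * E"
      by (intro mult_right_mono) (use FF_finite in \<open>auto simp: E_def intro: card_mono\<close>)
    also have "\<dots> \<le> (NN B + 1) ^ card C * E" by (intro mult_right_mono card_FF) (simp add: E_def)
    also have "E = exp K * (NN B ^ card C * exp (- \<eta> * NN B))"
    proof -
      have "exp (card C * ln (NN B)) = NN B ^ card C" using NNp by (simp add: exp_of_nat_mult)
      then show ?thesis unfolding E_def by (simp add: exp_add exp_diff exp_minus field_simps)
    qed
    also have "(NN B + 1) ^ card C * (exp K * (NN B ^ card C * exp (- \<eta> * NN B))) \<le> g B"
    proof -
      have "NN B ^ card C \<le> (NN B + 1) ^ card C" using NNp by (intro power_mono) auto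
      then have "(NN B + 1) ^ card C * NN B ^ card C \<le> (NN B + 1) ^ card C * (NN B + 1) ^ card C"
        using NNp by (intro mult_left_mono) auto
      also have "\<dots> = (NN B + 1) ^ (2 * card C)" by (simp add: power_add[symmetric] mult_2)
      finally have "(NN B + 1) ^ card C * NN B ^ card C \<le> (NN B + 1) ^ (2 * card C)" .
      then have "exp K * exp (- \<eta> * NN B) * ((NN B + 1) ^ card C * NN B ^ card C) \<le> exp K * exp (- \<eta> * NN B) * (NN B + 1) ^ (2 * card C)"
        by (intro mult_left_mono) auto
      then show ?thesis unfolding g_def by (simp add: mult_ac)
    qed
    finally show "(\<Sum>n\<in>{n\<in>FF B. real (n c) \<le> \<theta> * aa B c}. pst B n) \<le> g B" .
  qed
  have lower: "eventually (\<lambda>B. 0 \<le> (\<Sum>n\<in>{n\<in>FF B. real (n c) \<le> \<theta> * aa B c}. pst B n)) sequentially"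
    using pst_nonneg by (intro always_eventually allI sum_nonneg) auto
  show ?thesis using tendsto_sandwich[OF lower bound tendsto_const] glim by simp
qed

end

context LN begin

abbreviation AP where "AP B d \<equiv> accept_prob C nuh M U \<rho> B d"
definition bad where "bad \<theta> B d = (\<Sum>n\<in>{n\<in>FF B. real (n d) \<le> \<theta> * aa B d}. pst B n)"

lemma m_eq: "mn / \<rho> = min 1 (1 / \<rho>)"
  unfolding mn_def using rho by (cases "\<rho> \<le> 1") (auto simp: min_def field_simps)

lemma acc_nonneg: "1 \<le> B \<Longrightarrow> 0 \<le> AP B c"
  unfolding accept_eq using pst_nonneg by (simp add: sum_nonneg)

lemma acc_le1: "1 \<le> B \<Longrightarrow> AP B c \<le> 1"
proof -
  assume B: "1 \<le> B"
  have "AP B c \<le> (\<Sum>n\<in>FF B. pst B n)" unfolding accept_eq[OF B]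
    by (rule sum_mono2) (use FF_finite pst_nonneg in auto)
  then show ?thesis using pst_sum by simp
qed

lemma acc_lower:
  assumes B: "1 \<le> B" and d: "d \<in> C" and th: "0 \<le> \<theta>"
  shows "AP B d \<ge> \<theta> * min 1 (1 / \<rho>) * (1 - bad \<theta> B d)"
proof -
  have nup: "0 < nu B d" by (rule nu_pos[OF d B])
  have "aa B d = min 1 (1 / \<rho>) * nu B d" unfolding m_eq[symmetric] nu_eq aa_def using rho by simp
  then have "nu B d * (\<theta> * min 1 (1 / \<rho>) * (1 - bad \<theta> B d)) \<le> nu B d * AP B d"
    using lower_mean[OF th d, of B] mean_eq[OF B d] unfolding bad_def by (simp add: mult_ac)
  then show ?thesis using nup by simp
qed

lemma acc_sum: "1 \<le> B \<Longrightarrow> (\<Sum>d\<in>C. nuh d * AP B d) \<le> 1 / \<rho>"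
proof -
  assume B: "1 \<le> B"
  have NNp: "0 < NN B" by (rule NN_pos[OF B])
  have "(\<Sum>d\<in>C. nu B d * AP B d) \<le> NN B" using sum_means[of B] mean_eq[OF B] by simp
  then have "\<rho> * NN B * (\<Sum>d\<in>C. nuh d * AP B d) \<le> NN B"
    unfolding nu_eq by (simp add: sum_distrib_left mult_ac)
  then have "\<rho> * (\<Sum>d\<in>C. nuh d * AP B d) \<le> 1" using NNp by (simp add: mult_ac)
  then show ?thesis using rho by (simp add: field_simps)
qed

lemma main: "c \<in> C \<Longrightarrow> (\<lambda>B. AP B c) \<longlonglongrightarrow> min 1 (1 / \<rho>)"
proof -
  assume c: "c \<in> C"
  define m where "m = min 1 (1 / \<rho>)"
  have m0: "0 \<le> m" "m \<le> 1" unfolding m_def using rho by auto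
  show ?thesis unfolding m_def[symmetric] tendsto_iff
  proof (intro allI impI)
    fix e :: real assume e: "0 < e"
    define e1 where "e1 = e * nuh c / 4"
    have nc: "0 < nuh c" "nuh c \<le> 1" using pos c nuh_le1[OF c] by auto
    have e1p: "0 < e1" unfolding e1_def using e nc by simp
    have e1e: "e1 \<le> e / 4" unfolding e1_def using e nc by (simp add: field_simps)
    define \<theta> where "\<theta> = max (1/2) (1 - e1)"
    define \<beta> where "\<beta> = min e1 (1/2)"
    have th: "0 < \<theta>" "\<theta> < 1" unfolding \<theta>_def using e1p by auto
    have tb: "1 - 2 * e1 \<le> \<theta> * (1 - \<beta>)"
    proof (cases "e1 \<le> 1")
      case True
      have "(1 - e1) * (1 - e1) \<le> \<theta> * (1 - \<beta>)" unfolding \<theta>_def \<beta>_def using True e1p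
        by (intro mult_mono) auto
      then show ?thesis by (simp add: algebra_simps) (smt (verit) zero_le_square e1p)
    next
      case False
      have "0 \<le> \<theta> * (1 - \<beta>)" unfolding \<theta>_def \<beta>_def by (intro mult_nonneg_nonneg) auto
      then show ?thesis using False by linarith
    qed
    have evb: "eventually (\<lambda>B. \<forall>d\<in>C. bad \<theta> B d < \<beta>) sequentially"
    proof (rule eventually_ball_finite[OF finC], rule ballI)
      fix d assume d: "d \<in> C"
      have "(\<lambda>B. bad \<theta> B d) \<longlonglongrightarrow> 0" unfolding bad_def by (rule conc[OF d th])
      moreover have "0 < \<beta>" unfolding \<beta>_def using e1p by simp
      ultimately show "eventually (\<lambda>B. bad \<theta> B d < \<beta>) sequentially" by (rule order_tendstoD(2))
    qed
    have ev: "eventually (\<lambda>B. 1 \<le> B \<and> (\<forall>d\<in>C. bad \<theta> B d < \<beta>)) sequentially"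
      using eventually_conj[OF eventually_ge_at_top[of 1] evb] by simp
    show "eventually (\<lambda>B. dist (AP B c) m < e) sequentially"
      using ev
    proof (rule eventually_mono)
      fix B assume BB: "1 \<le> B \<and> (\<forall>d\<in>C. bad \<theta> B d < \<beta>)"
      have B: "1 \<le> B" using BB by simp
      have low: "m - 2 * e1 \<le> AP B d" if d: "d \<in> C" for d
      proof -
        have "\<theta> * m * (1 - \<beta>) \<le> \<theta> * m * (1 - bad \<theta> B d)"
          using BB d th m0 by (intro mult_left_mono) auto
        also have "\<dots> \<le> AP B d" using acc_lower[OF B d] th unfolding m_def by simp
        finally have "m * (\<theta> * (1 - \<beta>)) \<le> AP B d" by (simp add: mult_ac)
        moreover have "m * (1 - 2 * e1) \<le> m * (\<theta> * (1 - \<beta>))" using tb m0 by (intro mult_left_mono) auto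
        moreover have "m - 2 * e1 \<le> m * (1 - 2 * e1)" using m0 e1p by (simp add: algebra_simps)
        ultimately show ?thesis by linarith
      qed
      have up: "AP B c \<le> m + 2 * e1 / nuh c"
      proof (cases "\<rho> \<le> 1")
        case True
        then have "m = 1" unfolding m_def using rho by simp
        moreover have "0 \<le> 2 * e1 / nuh c" using e1p nc by simp
        ultimately show ?thesis using acc_le1[OF B, of c] by linarith
      next
        case False
        then have m1: "m = 1 / \<rho>" unfolding m_def by simp
        have "(\<Sum>d\<in>C - {c}. nuh d * (m - 2 * e1)) \<le> (\<Sum>d\<in>C - {c}. nuh d * AP B d)"
          using low pos by (intro sum_mono mult_left_mono) (auto intro: less_imp_le)
        moreover have "(\<Sum>d\<in>C - {c}. nuh d * (m - 2 * e1)) = (1 - nuh c) * (m - 2 * e1)"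
          using sum.remove[OF finC c, of nuh] sum1 by (simp add: sum_distrib_right[symmetric])
        moreover have "(\<Sum>d\<in>C. nuh d * AP B d) = nuh c * AP B c + (\<Sum>d\<in>C - {c}. nuh d * AP B d)"
          by (rule sum.remove[OF finC c])
        ultimately have "nuh c * AP B c \<le> m - (1 - nuh c) * (m - 2 * e1)"
          using acc_sum[OF B] m1 by linarith
        also have "\<dots> = nuh c * m + 2 * e1 * (1 - nuh c)" by (simp add: algebra_simps)
        also have "\<dots> \<le> nuh c * m + 2 * e1" using e1p nc by (simp add: algebra_simps)
        also have "\<dots> = nuh c * (m + 2 * e1 / nuh c)" using nc by (simp add: field_simps)
        finally have "nuh c * AP B c \<le> nuh c * (m + 2 * e1 / nuh c)" .
        then show ?thesis using nc by simp
      qed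
      have "2 * e1 / nuh c = e / 2" unfolding e1_def using nc by (simp add: field_simps)
      then have "AP B c < m + e" using up e by linarith
      moreover have "m - e < AP B c" using low[OF c] e1e e by linarith
      ultimately show "dist (AP B c) m < e" by (simp add: dist_real_def abs_less_iff)
    qed
  qed
qed

end

theorem theorem1:
  fixes C :: "'a set" and nuh :: "'a \<Rightarrow> real" and M U :: nat and \<rho> :: real and c :: 'a
  assumes "finite C"
    and "\<forall>x\<in>C. nuh x > 0"
    and "(\<Sum>x\<in>C. nuh x) = 1"
    and "1 \<le> M" and "1 \<le> U" and "M \<le> card C"
    and "\<rho> > 0"
    and "c \<in> C"
  shows "(\<lambda>B. accept_prob C nuh M U \<rho> B c) \<longlonglongrightarrow> min 1 (1 / \<rho>)"
proof -
  interpret LN C nuh M U \<rho> by unfold_locales (use assms in auto)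
  show ?thesis by (rule main[OF assms(8)])
qed

end
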